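(* In the setting of the context, the four functions $u=H_{2n}$, $v=H_{2n+1}$, $f=S^{[1]}_{2n}$, $g=S^{[1]}_{2n+1}$ satisfy the following three systems of nonlinear difference equations. (1) For the shifts $\hat{}\,$, $\tilde{}\,$, $\bar{}\,$: \begin{align*} g(\tilde{f}-\hat{f})+\tilde{g}(\tilde{\hat{f}}-\tilde{f})+\hat{g}(\hat{f}-\hat{\tilde{f}})&=\frac{1}{\tilde{d}}\left(\frac{\hat{\bar {u}}}{\hat{\tilde{u}}}-\frac{\bar {u}}{\tilde{u}}\right)+\frac{1}{\hat{d}}\left(\frac{\bar {u}}{\hat{u}}-\frac{\tilde{\bar {u}}}{\tilde{\hat{u}}}\right),\\ \bar {f}(\hat{g}-\tilde{g})+\tilde{\bar{f}}(\tilde{g}-\tilde{\hat{g}})+\hat{\bar {f}}(\hat{\tilde{g}}-\hat{g})&= \frac{1}{\tilde{d}}\left(\frac{\bar {v}}{\tilde{v}}-\frac{\hat{\bar {v}}}{\hat{\tilde{v}}}\right),\\ \frac{1}{\tilde{d}}\frac{\hat{\bar {u}}}{\hat{\tilde{u}}}(\hat{\bar {f}}-\bar {f})+\frac{1}{\hat{d}}\frac{\tilde{\bar {u}}}{\tilde{\hat{u}}}(\bar {f}-\tilde{\bar {f}})+\frac{1}{\tilde{d}}\frac{\bar {v}}{\tilde{v}}(\tilde{f}-\tilde{\hat{f}})&=0,\\ \frac{1}{\hat{d}}\frac{\bar {\bar {u}}}{\hat{\bar {u}}}(\hat{g}-\hat{\tilde{g}})+\frac{1}{\tilde{d}}\frac{\bar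 {\bar {u}}}{\tilde{\bar {u}}}(\tilde{\hat{g}}-\tilde{g})+\frac{1}{\tilde{d}}\frac{\hat{\bar {v}}}{\hat{\tilde{v}}}(\bar {g}-\hat{\bar {g}})&=0. \end{align*} (2) For the shifts $\check{}\,$, $\tilde{}\,$, $\bar{}\,$: \begin{align*} g(\tilde{f}-\check{f})+\tilde{g}(\check{\tilde{f}}-\tilde{f})+\check{g}(\check{f}-\check{\tilde{f}})&=\frac{1}{\tilde{d}}\left(\frac{\check{\bar {u}}}{\check{\tilde{u}}}-\frac{\bar {u}}{\tilde{u}}\right),\\ \bar {f}(\tilde{g}-\check{g})+\tilde{\bar {f}}(\tilde{\check{g}}-\tilde{g})+\check{\bar {f}}(\check{g}-\check{\tilde{g}})&= \frac{1}{\tilde{d}}\left(\frac{\check{\bar {v}}}{\check{\tilde{v}}}-\frac{\bar {v}}{\tilde{v}}\right)+\frac{1}{\check{d}}\left(\frac{\bar {v}}{\check{v}}-\frac{\tilde{\bar {v}}}{\check{\tilde{v}}}\right),\\ \frac{1}{\tilde{d}}\frac{\check{\bar {u}}}{\check{\tilde{u}}}(\bar {f}-\check{\bar {f}})+\frac{1}{\check{d}}\frac{\bar {v}}{\check{v}}(\check{f}-\check{\tilde{f}})+\frac{1}{\tilde{d}}\frac{\bar {v}}{\tilde{v}}(\tilde{\check{f}}-\tilde{f})&=0,\\ \frac{1}{\tilde{d}}\frac{\bar {\bar {u}}}{\tilde{\bar {u}}}(\tilde{g}-\tilde{\check{g}}) +\frac{1}{\check{d}}\frac{\tilde{\bar {v}}}{\tilde{\check{v}}}(\bar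 {g}-\tilde{\bar {g}})+\frac{1}{\tilde{d}}\frac{\check{\bar {v}}}{\check{\tilde{v}}}(\check{\bar {g}}-\bar {g})&=0. \end{align*} (3) For the shifts $\hat{}\,$, $\check{}\,$, $\bar{}\,$: \begin{align*} \frac{1}{\hat d}\frac{\check{\bar {u}}}{\check{\hat{u}}}(\bar {f}-\check{\bar {f}})+\frac{1}{\check d}\frac{\bar {v}}{\check{v}}(\check{f}-\check{\hat{f}})&=0,\\ \frac{1}{\hat d}\frac{\bar {\bar {u}}}{\hat{\bar {u}}}(\hat{\check{g}}-\hat{g})+\frac{1}{\check d}\frac{\hat{\bar {v}}}{\check{\hat{v}}}(\hat{\bar {g}}-\bar {g})&= 0,\\ g(\check{f}-\hat{f})+\check{g}(\check{\hat{f}}-\check{f})+\hat{g}(\hat{f}-\check{\hat{f}})&=\frac{1}{\hat{d}}\left(\frac{\bar {u}}{\hat{u}}-\frac{\check{\bar {u}}}{\hat{\check{u}}}\right),\\ \bar {f}(\check{g}-\hat{g})+\check{\bar {f}}(\check{\hat{g}}-{\check{g}})+\hat{\bar {f}}(\hat{g}-\check{\hat{g}})&=\frac{1}{\check{d}}\left(\frac{\hat{\bar {v}}}{\check{\hat{v}}}-\frac{\bar {v}}{\check{v}}\right). \end{align*}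
   Context: Fix $N,M^{(1)},M^{(2)}\in\mathbb N_0$, parameters $b^{(a)}_i$ ($a\in\{1,2\}$, $1\le i\le M^{(a)}$), $c_j$ ($1\le j\le N$), $\eta^{(1)},\eta^{(2)}$, and hypergeometric weights on $\mathbb N_0$: $w^{(a)}(k)=\frac{(b^{(a)}_1)_k\cdots(b^{(a)}_{M^{(a)}})_k}{(c_1)_k\cdots(c_N)_k}\frac{(\eta^{(a)})^k}{k!}$, with $(b)_k$ the Pochhammer symbol. The moment matrix $\mathscr M$ (indices from $0$) has entries $\mathscr M_{n,2m}=\sum_{k\ge0}k^{n+m}w^{(1)}(k)$, $\mathscr M_{n,2m+1}=\sum_{k\ge0}k^{n+m}w^{(2)}(k)$. It is assumed that for all parameter values considered (including the shifted ones below) the series converge and all leading principal minors $\tau_n$ of $\mathscr M$ are nonzero, so that $\mathscr M=S^{-1}H\tilde S^{-\top}$ with $S,\tilde S$ lower unitriangular semi-infinite matrices and $H=\operatorname{diag}(H_0,H_1,\dots)$. Write $S=I+\Lambda^\top S^{[1]}+(\Lambda^\top)^2S^{[2]}+\cdots$ with $\Lambda$ the shift matrix (ones on the first superdiagonal) and $S^{[k]}=\operatorname{diag}(S^{[k]}_0,S^{[k]}_1,\dots)$; thus $S^{[1]}_n$ is the coefficient of $x^{n}$ in the monic type II multiple orthogonal polynomial $B_{n+1}$ given by the entries of $SX(x)$, $X(x)=(1,x,x^2,\dots)^\top$. Shift notation for a function $u$ of $n$ and the parameters: $\hat u$ is $u$ with one fixed parameter $b^{(1)}_r$ replaced by $b^{(1)}_r+1$,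 and $\hat d:=b^{(1)}_r$; $\check u$ is $u$ with one fixed parameter $b^{(2)}_q$ replaced by $b^{(2)}_q+1$, and $\check d:=b^{(2)}_q$; $\tilde u$ is $u$ with one fixed parameter $c_s$ replaced by $c_s-1$, and $\tilde d:=c_s-1$; $\bar u$ is $u$ with $n$ replaced by $n+2$. Combined symbols denote the composition of the corresponding shifts. *)

theory Defs
  imports "Jordan_Normal_Form.Determinant"
begin

definition hweight :: "complex list \<Rightarrow> complex list \<Rightarrow> complex \<Rightarrow> nat \<Rightarrow> complex" where
  "hweight bs cs eta k =
     (\<Prod>b\<leftarrow>bs. pochhammer b k) / (\<Prod>c\<leftarrow>cs. pochhammer c k) * eta ^ k / fact k"

definition mom_term :: "complex list \<Rightarrow> complex list \<Rightarrow> complex list \<Rightarrow> complex \<Rightarrow> complex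
    \<Rightarrow> nat \<Rightarrow> nat \<Rightarrow> nat \<Rightarrow> complex" where
  "mom_term b1 b2 cs e1 e2 i j k =
     (if even j then of_nat k ^ (i + j div 2) * hweight b1 cs e1 k
      else of_nat k ^ (i + j div 2) * hweight b2 cs e2 k)"

definition moment :: "complex list \<Rightarrow> complex list \<Rightarrow> complex list \<Rightarrow> complex \<Rightarrow> complex
    \<Rightarrow> nat \<Rightarrow> nat \<Rightarrow> complex" where
  "moment b1 b2 cs e1 e2 i j = (\<Sum>k. mom_term b1 b2 cs e1 e2 i j k)"

definition tau :: "(nat \<Rightarrow> nat \<Rightarrow> complex) \<Rightarrow> nat \<Rightarrow> complex" where
  "tau M n = det (mat n n (\<lambda>(i, j). M i j))"

text \<open>Gauss--Borel factorization M = S^{-1} H St^{-T} with S, St lower unitriangular and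
  H diagonal, written in the equivalent form S M St^T = H (all sums are finite because
  S and St are lower triangular).\<close>
definition is_gauss_borel ::
  "(nat \<Rightarrow> nat \<Rightarrow> complex) \<Rightarrow> (nat \<Rightarrow> nat \<Rightarrow> complex) \<Rightarrow> (nat \<Rightarrow> complex)
     \<Rightarrow> (nat \<Rightarrow> nat \<Rightarrow> complex) \<Rightarrow> bool" where
  "is_gauss_borel M S H St \<longleftrightarrow>
     (\<forall>i j. i < j \<longrightarrow> S i j = 0) \<and> (\<forall>i. S i i = 1) \<and>
     (\<forall>i j. i < j \<longrightarrow> St i j = 0) \<and> (\<forall>i. St i i = 1) \<and>
     (\<forall>i j. (\<Sum>l\<le>j. \<Sum>k\<le>i. S i k * M k l * St j l) = (if i = j then H i else 0))"

definition gauss_borel :: "(nat \<Rightarrow> nat \<Rightarrow> complex)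
    \<Rightarrow> (nat \<Rightarrow> nat \<Rightarrow> complex) \<times> (nat \<Rightarrow> complex) \<times> (nat \<Rightarrow> nat \<Rightarrow> complex)" where
  "gauss_borel M = (THE (S, H, St). is_gauss_borel M S H St)"

text \<open>H_m (diagonal entry of H) and S^{[1]}_m = S_{m+1,m}, the coefficient of x^m in B_{m+1}.\<close>
definition GB_H :: "(nat \<Rightarrow> nat \<Rightarrow> complex) \<Rightarrow> nat \<Rightarrow> complex" where
  "GB_H M m = fst (snd (gauss_borel M)) m"

definition GB_S1 :: "(nat \<Rightarrow> nat \<Rightarrow> complex) \<Rightarrow> nat \<Rightarrow> complex" where
  "GB_S1 M m = fst (gauss_borel M) (Suc m) m"

definition standing_assms :: "complex list \<Rightarrow> complex list \<Rightarrow> complex list \<Rightarrow> complex \<Rightarrow> complex \<Rightarrow> bool" where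
  "standing_assms b1 b2 cs e1 e2 \<longleftrightarrow>
     (\<forall>k. (\<Prod>c\<leftarrow>cs. pochhammer c k) \<noteq> 0) \<and>
     (\<forall>i j. summable (mom_term b1 b2 cs e1 e2 i j)) \<and>
     (\<forall>n. tau (moment b1 b2 cs e1 e2) n \<noteq> 0)"

end

theory Submission
  imports Defs
begin

lemma mat_T_swap: "transpose_mat (mat n n (\<lambda>(i,j). M i j)) = mat n n (\<lambda>(i,j). M j i)"
  by (rule eq_matI) auto

lemma det_swap: "det (mat n n (\<lambda>(i,j). M j i)) = det (mat n n (\<lambda>(i,j). (M::nat\<Rightarrow>nat\<Rightarrow>complex) i j))"
  using det_transpose[of "mat n n (\<lambda>(i,j). M i j)" n] mat_T_swap[of n M] by simp

lemma mulv_comp: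
  assumes "k < n" shows "(mat n n (\<lambda>(i,j). M i j) *\<^sub>v vec n y) $ k = (\<Sum>l<n. M k l * y l)"
  using assms by (simp add: scalar_prod_def row_def atLeast0LessThan)

lemma rk:
  fixes M :: "nat \<Rightarrow> nat \<Rightarrow> complex"
  assumes d: "det (mat n n (\<lambda>(i,j). M i j)) \<noteq> 0" and h: "\<forall>k<n. (\<Sum>l<n. M k l * y l) = 0"
  shows "\<forall>l<n. y l = 0"
proof -
  have "mat n n (\<lambda>(i,j). M i j) *\<^sub>v vec n y = 0\<^sub>v n"
  proof (rule eq_vecI)
    fix i assume "i < dim_vec (0\<^sub>v n :: complex vec)"
    then have i: "i < n" by simp
    show "(mat n n (\<lambda>(i,j). M i j) *\<^sub>v vec n y) $ i = 0\<^sub>v n $ i"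
      using mulv_comp[OF i, of M y] h i by simp
  qed simp
  moreover have "vec n y \<in> carrier_vec n" by simp
  ultimately have "vec n y = 0\<^sub>v n"
    using det_0_iff_vec_prod_zero[OF mat_carrier[of n n "\<lambda>(i,j). M i j"]] d by blast
  then show ?thesis by (metis index_vec index_zero_vec(1))
qed

lemma lk:
  fixes M :: "nat \<Rightarrow> nat \<Rightarrow> complex"
  assumes d: "det (mat n n (\<lambda>(i,j). M i j)) \<noteq> 0" and h: "\<forall>l<n. (\<Sum>k<n. y k * M k l) = 0"
  shows "\<forall>k<n. y k = 0"
proof -
  have d': "det (mat n n (\<lambda>(i,j). M j i)) \<noteq> 0" using d det_swap[of n M] by simp
  show ?thesis using rk[of n "\<lambda>i j. M j i" y] d' h by (simp add: mult.commute)
qed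

lemma rs:
  fixes M :: "nat \<Rightarrow> nat \<Rightarrow> complex"
  assumes d: "det (mat n n (\<lambda>(i,j). M i j)) \<noteq> 0"
  shows "\<exists>y. \<forall>k<n. (\<Sum>l<n. M k l * y l) = b k"
proof -
  let ?A = "mat n n (\<lambda>(i,j). M i j)"
  have A: "?A \<in> carrier_mat n n" by simp
  from det_non_zero_imp_unit[OF A d, of "()"]
  obtain B where B: "B \<in> carrier_mat n n" "?A * B = 1\<^sub>m n"
    by (auto simp: Units_def ring_mat_def)
  define w where "w = B *\<^sub>v vec n b"
  have w: "w \<in> carrier_vec n" unfolding w_def using B(1) by simp
  have "?A *\<^sub>v w = (?A * B) *\<^sub>v vec n b"
    unfolding w_def by (rule assoc_mult_mat_vec[symmetric]) (use B in auto)
  also have "\<dots> = vec n b" using B(2) by simp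
  finally have Aw: "?A *\<^sub>v w = vec n b" .
  have "\<forall>k<n. (\<Sum>l<n. M k l * w $ l) = b k"
  proof (intro allI impI)
    fix k assume k: "k < n"
    have "(?A *\<^sub>v w) $ k = (\<Sum>l<n. M k l * w $ l)"
      using k w by (simp add: scalar_prod_def row_def atLeast0LessThan)
    then show "(\<Sum>l<n. M k l * w $ l) = b k" using Aw k by simp
  qed
  then show ?thesis by blast
qed

lemma ls:
  fixes M :: "nat \<Rightarrow> nat \<Rightarrow> complex"
  assumes d: "det (mat n n (\<lambda>(i,j). M i j)) \<noteq> 0"
  shows "\<exists>y. \<forall>l<n. (\<Sum>k<n. y k * M k l) = b l"
proof -
  have d': "det (mat n n (\<lambda>(i,j). M j i)) \<noteq> 0" using d det_swap[of n M] by simp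
  show ?thesis using rs[of n "\<lambda>i j. M j i" b] d' by (simp add: mult.commute)
qed

lemma sum_le_ext:
  fixes S :: "nat \<Rightarrow> nat \<Rightarrow> complex"
  assumes "\<forall>k>i. S i k = 0" "i \<le> N"
  shows "(\<Sum>k\<le>N. S i k * X k) = (\<Sum>k\<le>i. S i k * X k)"
  by (rule sum.mono_neutral_right) (use assms in auto)

lemma sum_le_split: "(\<Sum>k\<le>(i::nat). F k) = F i + (\<Sum>k<i. F k)"
  by (simp add: lessThan_Suc_atMost[symmetric] add.commute)

lemma gb_inner:
  fixes S M St :: "nat \<Rightarrow> nat \<Rightarrow> complex"
  shows "(\<Sum>l\<le>j. \<Sum>k\<le>i. S i k * M k l * St j l) = (\<Sum>l\<le>j. (\<Sum>k\<le>i. S i k * M k l) * St j l)"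
  by (simp add: sum_distrib_right)

lemma gb_inner2:
  fixes S M St :: "nat \<Rightarrow> nat \<Rightarrow> complex"
  shows "(\<Sum>l\<le>j. \<Sum>k\<le>i. S i k * M k l * St j l) = (\<Sum>k\<le>i. S i k * (\<Sum>l\<le>j. M k l * St j l))"
  by (subst sum.swap) (simp add: sum_distrib_left mult.assoc)

lemma gb_clause:
  assumes gb: "is_gauss_borel M S H St"
  shows "(\<Sum>l\<le>j. \<Sum>k\<le>i. S i k * M k l * St j l) = (if i = j then H i else 0)"
  using gb unfolding is_gauss_borel_def by blast

lemma gb_P_zero:
  assumes gb: "is_gauss_borel M S H St"
  shows "l < i \<Longrightarrow> (\<Sum>k\<le>i. S i k * M k l) = 0"
proof (induction l rule: less_induct)
  case (less l)
  from gb have c: "(\<Sum>l'\<le>l. \<Sum>k\<le>i. S i k * M k l' * St l l') = 0"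
    using gb_clause[OF gb, where i=i and j=l] less.prems by simp
  have z: "(\<Sum>l'<l. (\<Sum>k\<le>i. S i k * M k l') * St l l') = 0"
    using less.IH less.prems by (intro sum.neutral) auto
  have "St l l = 1" using gb unfolding is_gauss_borel_def by blast
  then show ?case using c z unfolding gb_inner sum_le_split[of "\<lambda>l'. (\<Sum>k\<le>i. S i k * M k l') * St l l'" l] by simp
qed

lemma gb_P_diag:
  assumes gb: "is_gauss_borel M S H St"
  shows "(\<Sum>k\<le>i. S i k * M k i) = H i"
proof -
  from gb have c: "(\<Sum>l'\<le>i. \<Sum>k\<le>i. S i k * M k l' * St i l') = H i"
    using gb_clause[OF gb, where i=i and j=i] by simp
  have z: "(\<Sum>l'<i. (\<Sum>k\<le>i. S i k * M k l') * St i l') = 0"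
    using gb_P_zero[OF gb] by (intro sum.neutral) auto
  have "St i i = 1" using gb unfolding is_gauss_borel_def by blast
  then show ?thesis using c z unfolding gb_inner sum_le_split[of "\<lambda>l'. (\<Sum>k\<le>i. S i k * M k l') * St i l'" i] by simp
qed

lemma gb_Q_zero:
  assumes gb: "is_gauss_borel M S H St"
  shows "k < j \<Longrightarrow> (\<Sum>l\<le>j. M k l * St j l) = 0"
proof (induction k rule: less_induct)
  case (less k)
  from gb have c: "(\<Sum>l\<le>j. \<Sum>k'\<le>k. S k k' * M k' l * St j l) = 0"
    using gb_clause[OF gb, where i=k and j=j] less.prems by simp
  have z: "(\<Sum>k'<k. S k k' * (\<Sum>l\<le>j. M k' l * St j l)) = 0"
    using less.IH less.prems by (intro sum.neutral) auto
  have "S k k = 1" using gb unfolding is_gauss_borel_def by blast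
  then show ?case using c z unfolding gb_inner2 sum_le_split[of "\<lambda>k'. S k k' * (\<Sum>l\<le>j. M k' l * St j l)" k] by simp
qed

lemma gb_S_tri: "is_gauss_borel M S H St \<Longrightarrow> i < k \<Longrightarrow> S i k = 0"
  and gb_S_one: "is_gauss_borel M S H St \<Longrightarrow> S i i = 1"
  and gb_St_tri: "is_gauss_borel M S H St \<Longrightarrow> i < k \<Longrightarrow> St i k = 0"
  and gb_St_one: "is_gauss_borel M S H St \<Longrightarrow> St i i = 1"
  unfolding is_gauss_borel_def by blast+

lemma gb_unique:
  fixes M :: "nat \<Rightarrow> nat \<Rightarrow> complex"
  assumes tau: "\<forall>n. tau M n \<noteq> 0"
    and g1: "is_gauss_borel M S H St" and g2: "is_gauss_borel M S' H' St'"
  shows "S = S' \<and> H = H' \<and> St = St'"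
proof -
  have SS: "S = S'"
  proof (intro ext)
    fix i k
    show "S i k = S' i k"
    proof (cases "k < i")
      case False
      then show ?thesis using gb_S_tri[OF g1, of i k] gb_S_tri[OF g2, of i k] gb_S_one[OF g1, of i] gb_S_one[OF g2, of i]
        by (cases "k = i") auto
    next
      case True
      have "\<forall>l<i. (\<Sum>k'<i. (S i k' - S' i k') * M k' l) = 0"
      proof (intro allI impI)
        fix l assume l: "l < i"
        have "(\<Sum>k'<i. (S i k' - S' i k') * M k' l) = (\<Sum>k'<i. S i k' * M k' l) - (\<Sum>k'<i. S' i k' * M k' l)"
          by (simp add: sum_subtractf left_diff_distrib)
        also have "\<dots> = ((\<Sum>k'\<le>i. S i k' * M k' l) - M i l) - ((\<Sum>k'\<le>i. S' i k' * M k' l) - M i l)"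
          using gb_S_one[OF g1, of i] gb_S_one[OF g2, of i] by (simp add: sum_le_split)
        also have "\<dots> = 0" using gb_P_zero[OF g1 l] gb_P_zero[OF g2 l] by simp
        finally show "(\<Sum>k'<i. (S i k' - S' i k') * M k' l) = 0" .
      qed
      from lk[OF tau[rule_format, of i, unfolded tau_def] this] True show ?thesis by auto
    qed
  qed
  have StSt: "St = St'"
  proof (intro ext)
    fix j l
    show "St j l = St' j l"
    proof (cases "l < j")
      case False
      then show ?thesis using gb_St_tri[OF g1, of j l] gb_St_tri[OF g2, of j l] gb_St_one[OF g1, of j] gb_St_one[OF g2, of j]
        by (cases "l = j") auto
    next
      case True
      have "\<forall>k<j. (\<Sum>l'<j. M k l' * (St j l' - St' j l')) = 0"
      proof (intro allI impI)
        fix k assume k: "k < j"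
        have "(\<Sum>l'<j. M k l' * (St j l' - St' j l')) = (\<Sum>l'<j. M k l' * St j l') - (\<Sum>l'<j. M k l' * St' j l')"
          by (simp add: sum_subtractf right_diff_distrib)
        also have "\<dots> = ((\<Sum>l'\<le>j. M k l' * St j l') - M k j) - ((\<Sum>l'\<le>j. M k l' * St' j l') - M k j)"
          using gb_St_one[OF g1, of j] gb_St_one[OF g2, of j] by (simp add: sum_le_split)
        also have "\<dots> = 0" using gb_Q_zero[OF g1 k] gb_Q_zero[OF g2 k] by simp
        finally show "(\<Sum>l'<j. M k l' * (St j l' - St' j l')) = 0" .
      qed
      from rk[OF tau[rule_format, of j, unfolded tau_def] this] True show ?thesis by auto
    qed
  qed
  have "H = H'"
  proof
    fix i show "H i = H' i" using gb_P_diag[OF g1, of i] gb_P_diag[OF g2, of i] SS by simp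
  qed
  with SS StSt show ?thesis by blast
qed

lemma gb_exists:
  fixes M :: "nat \<Rightarrow> nat \<Rightarrow> complex"
  assumes tau: "\<forall>n. tau M n \<noteq> 0"
  shows "\<exists>S H St. is_gauss_borel M S H St"
proof -
  define ys where "ys i = (SOME y. \<forall>l<i. (\<Sum>k<i. y k * M k l) = - M i l)" for i
  define zs where "zs j = (SOME z. \<forall>k<j. (\<Sum>l<j. M k l * z l) = - M k j)" for j
  have ys: "\<forall>l<i. (\<Sum>k<i. ys i k * M k l) = - M i l" for i
    using someI_ex[OF ls[OF tau[rule_format, of i, unfolded tau_def], of "\<lambda>l. - M i l"]]
    unfolding ys_def by simp
  have zs: "\<forall>k<j. (\<Sum>l<j. M k l * zs j l) = - M k j" for j
    using someI_ex[OF rs[OF tau[rule_format, of j, unfolded tau_def], of "\<lambda>k. - M k j"]]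
    unfolding zs_def by simp
  define S where "S i k = (if k < i then ys i k else if k = i then 1 else 0)" for i k
  define St where "St j l = (if l < j then zs j l else if l = j then 1 else 0)" for j l
  define H where "H i = (\<Sum>k\<le>i. S i k * M k i)" for i
  have P0: "(\<Sum>k\<le>i. S i k * M k l) = 0" if "l < i" for i l
  proof -
    have "(\<Sum>k\<le>i. S i k * M k l) = M i l + (\<Sum>k<i. ys i k * M k l)"
      unfolding sum_le_split by (simp add: S_def)
    then show ?thesis using ys[of i] that by simp
  qed
  have Q0: "(\<Sum>l\<le>j. M k l * St j l) = 0" if "k < j" for k j
  proof -
    have "(\<Sum>l\<le>j. M k l * St j l) = M k j + (\<Sum>l<j. M k l * zs j l)"
      unfolding sum_le_split by (simp add: St_def)
    then show ?thesis using zs[of j] that by simp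
  qed
  have "is_gauss_borel M S H St"
    unfolding is_gauss_borel_def
  proof (intro conjI allI impI)
    fix i j
    show "(\<Sum>l\<le>j. \<Sum>k\<le>i. S i k * M k l * St j l) = (if i = j then H i else 0)"
    proof (cases "j < i")
      case True
      then show ?thesis unfolding gb_inner using P0 by (intro trans[OF sum.neutral]) auto
    next
      case False
      show ?thesis
      proof (cases "i < j")
        case True
        then show ?thesis unfolding gb_inner2 using Q0 by (intro trans[OF sum.neutral]) auto
      next
        case False
        with \<open>\<not> j < i\<close> have "i = j" by simp
        moreover have "(\<Sum>l<i. (\<Sum>k\<le>i. S i k * M k l) * St i l) = 0"
          using P0 by (intro sum.neutral) auto
        moreover have "St i i = 1" by (simp add: St_def)
        ultimately have "(\<Sum>l\<le>i. \<Sum>k\<le>i. S i k * M k l * St i l) = H i"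
          unfolding gb_inner sum_le_split[of "\<lambda>l. (\<Sum>k\<le>i. S i k * M k l) * St i l" i] H_def by simp
        with \<open>i = j\<close> show ?thesis by simp
      qed
    qed
  qed (simp_all add: S_def St_def)
  then show ?thesis by blast
qed

lemma gb_ok:
  fixes M :: "nat \<Rightarrow> nat \<Rightarrow> complex"
  assumes tau: "\<forall>n. tau M n \<noteq> 0"
  shows "is_gauss_borel M (fst (gauss_borel M)) (fst (snd (gauss_borel M))) (snd (snd (gauss_borel M)))"
proof -
  obtain S H St where g: "is_gauss_borel M S H St" using gb_exists[OF tau] by blast
  have "gauss_borel M = (S, H, St)"
    unfolding gauss_borel_def
  proof (rule the_equality)
    show "case (S, H, St) of (S, H, St) \<Rightarrow> is_gauss_borel M S H St" using g by simp
  next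
    fix x assume "case x of (S, H, St) \<Rightarrow> is_gauss_borel M S H St"
    then show "x = (S, H, St)" using gb_unique[OF tau _ g] by (cases x) auto
  qed
  then show ?thesis using g by simp
qed

lemma gb_H_nz:
  fixes M :: "nat \<Rightarrow> nat \<Rightarrow> complex"
  assumes tau: "\<forall>n. tau M n \<noteq> 0" and g: "is_gauss_borel M S H St"
  shows "H i \<noteq> 0"
proof
  assume H0: "H i = 0"
  have "\<forall>l<Suc i. (\<Sum>k<Suc i. S i k * M k l) = 0"
  proof (intro allI impI)
    fix l assume "l < Suc i"
    then show "(\<Sum>k<Suc i. S i k * M k l) = 0"
      using gb_P_zero[OF g, of l i] gb_P_diag[OF g, of i] H0 by (cases "l = i") (auto simp: lessThan_Suc_atMost)
  qed
  from lk[OF tau[rule_format, of "Suc i", unfolded tau_def] this] gb_S_one[OF g, of i] show False by auto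
qed

lemma poch_shift:
  assumes "(b::complex) \<noteq> 0"
  shows "pochhammer (b+1) k = pochhammer b k * (1 + of_nat k / b)"
proof -
  have "b * pochhammer (b+1) k = pochhammer b k * (b + of_nat k)"
    using pochhammer_rec[of b k] pochhammer_Suc[of b k] by simp
  then show ?thesis using assms by (simp add: field_simps)
qed

lemma prod_upd:
  fixes xs :: "complex list"
  shows "r < length xs \<Longrightarrow> xs!r \<noteq> 0 \<Longrightarrow>
    (\<Prod>x\<leftarrow>xs[r := xs!r + 1]. pochhammer x k) = (\<Prod>x\<leftarrow>xs. pochhammer x k) * (1 + of_nat k / xs!r)"
proof (induction xs arbitrary: r)
  case Nil then show ?case by simp
next
  case (Cons a xs)
  show ?case
  proof (cases r)
    case 0
    then show ?thesis using Cons.prems poch_shift[of a k] by simp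
  next
    case (Suc r')
    then show ?thesis using Cons.prems Cons.IH[of r'] by simp
  qed
qed

lemma hw_hat:
  assumes "r < length bs" "bs!r \<noteq> 0"
  shows "hweight (bs[r := bs!r + 1]) cs e k = hweight bs cs e k * (1 + of_nat k / bs!r)"
  unfolding hweight_def prod_upd[OF assms] by simp

lemma aux_div:
  fixes Q P t A x y :: complex
  assumes "Q = P * t" "Q \<noteq> 0"
  shows "A / P * x / y = A / Q * x / y * t"
  using assms by (simp add: field_simps)

lemma hw_tilde:
  assumes s: "s < length cs" and d: "d = cs!s - 1" and dnz: "d \<noteq> 0"
    and p1: "(\<Prod>c\<leftarrow>cs. pochhammer c k) \<noteq> 0"
  shows "hweight bs (cs[s := d]) e k = hweight bs cs e k * (1 + of_nat k / d)"
proof -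
  let ?cs' = "cs[s := d]"
  have e: "?cs'[s := ?cs'!s + 1] = cs" using s d by simp
  have "(\<Prod>c\<leftarrow>cs. pochhammer c k) = (\<Prod>c\<leftarrow>?cs'. pochhammer c k) * (1 + of_nat k / d)"
    using prod_upd[of s ?cs' k] s dnz e by simp
  then show ?thesis unfolding hweight_def using p1 aux_div[of "\<Prod>c\<leftarrow>cs. pochhammer c k"] by blast
qed

lemma sa_summ: "standing_assms b1 b2 cs e1 e2 \<Longrightarrow> summable (mom_term b1 b2 cs e1 e2 i j)"
  unfolding standing_assms_def by blast

lemma sa_tau: "standing_assms b1 b2 cs e1 e2 \<Longrightarrow> \<forall>n. tau (moment b1 b2 cs e1 e2) n \<noteq> 0"
  unfolding standing_assms_def by blast

lemma sa_poch: "standing_assms b1 b2 cs e1 e2 \<Longrightarrow> (\<Prod>c\<leftarrow>cs. pochhammer c k) \<noteq> 0"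
  unfolding standing_assms_def by blast

lemma div2_plus2: "(j + 2) div 2 = j div 2 + (1::nat)" by simp

lemma moment_comb:
  fixes a b c :: "nat \<Rightarrow> complex"
  assumes "summable a" "summable b" "\<And>k. c k = a k + x * b k"
  shows "(\<Sum>k. c k) = (\<Sum>k. a k) + x * (\<Sum>k. b k)"
proof -
  have "(\<lambda>k. c k) = (\<lambda>k. a k + x * b k)" using assms(3) by auto
  moreover have sm: "summable (\<lambda>k. x * b k)" using assms(2) by (rule summable_mult)
  ultimately show ?thesis using suminf_add[OF assms(1) sm] suminf_mult[OF assms(2), of x] by simp
qed

lemma mom_hat:
  assumes sa: "standing_assms b1 b2 cs e1 e2" and r: "r < length b1" and d: "b1!r \<noteq> 0"
  shows "moment (b1[r := b1!r + 1]) b2 cs e1 e2 i j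
       = moment b1 b2 cs e1 e2 i j + (if even j then 1 / (b1!r) else 0) * moment b1 b2 cs e1 e2 i (j+2)"
proof (cases "even j")
  case False
  then show ?thesis unfolding moment_def mom_term_def by simp
next
  case True
  have "moment (b1[r := b1!r + 1]) b2 cs e1 e2 i j
       = moment b1 b2 cs e1 e2 i j + 1 / (b1!r) * moment b1 b2 cs e1 e2 i (j+2)"
    unfolding moment_def
  proof (rule moment_comb[OF sa_summ[OF sa] sa_summ[OF sa]])
    fix k
    show "mom_term (b1[r := b1 ! r + 1]) b2 cs e1 e2 i j k =
          mom_term b1 b2 cs e1 e2 i j k + 1 / b1 ! r * mom_term b1 b2 cs e1 e2 i (j + 2) k"
      using True d unfolding mom_term_def hw_hat[OF r d] div2_plus2
      by (simp add: algebra_simps)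
  qed
  then show ?thesis using True by simp
qed

lemma mom_check:
  assumes sa: "standing_assms b1 b2 cs e1 e2" and q: "q < length b2" and d: "b2!q \<noteq> 0"
  shows "moment b1 (b2[q := b2!q + 1]) cs e1 e2 i j
       = moment b1 b2 cs e1 e2 i j + (if odd j then 1 / (b2!q) else 0) * moment b1 b2 cs e1 e2 i (j+2)"
proof (cases "odd j")
  case False
  then show ?thesis unfolding moment_def mom_term_def by simp
next
  case True
  have "moment b1 (b2[q := b2!q + 1]) cs e1 e2 i j
       = moment b1 b2 cs e1 e2 i j + 1 / (b2!q) * moment b1 b2 cs e1 e2 i (j+2)"
    unfolding moment_def
  proof (rule moment_comb[OF sa_summ[OF sa] sa_summ[OF sa]])
    fix k
    show "mom_term b1 (b2[q := b2 ! q + 1]) cs e1 e2 i j k =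
          mom_term b1 b2 cs e1 e2 i j k + 1 / b2 ! q * mom_term b1 b2 cs e1 e2 i (j + 2) k"
      using True d unfolding mom_term_def hw_hat[OF q d] div2_plus2
      by (simp add: algebra_simps)
  qed
  then show ?thesis using True by simp
qed

lemma dt_nz:
  assumes sa: "standing_assms b1 b2 (cs[s := d]) e1 e2" and s: "s < length cs"
  shows "d \<noteq> 0"
proof
  assume "d = 0"
  then have "0 \<in> set (cs[s := d])" using s by (simp add: set_update_memI)
  then have "(\<Prod>c\<leftarrow>cs[s := d]. pochhammer c 1) = 0"
    by (simp add: prod_list_zero_iff)
  with sa_poch[OF sa, of 1] show False by simp
qed

lemma mom_tilde:
  assumes sa: "standing_assms b1 b2 cs e1 e2" and sa': "standing_assms b1 b2 (cs[s := cs!s - 1]) e1 e2"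
    and s: "s < length cs"
  shows "moment b1 b2 (cs[s := cs!s - 1]) e1 e2 i j
       = moment b1 b2 cs e1 e2 i j + 1 / (cs!s - 1) * moment b1 b2 cs e1 e2 i (j+2)"
  unfolding moment_def
proof (rule moment_comb[OF sa_summ[OF sa] sa_summ[OF sa]])
  fix k
  have dnz: "cs!s - 1 \<noteq> 0" using dt_nz[OF sa' s] .
  show "mom_term b1 b2 (cs[s := cs!s - 1]) e1 e2 i j k =
          mom_term b1 b2 cs e1 e2 i j k + 1 / (cs!s - 1) * mom_term b1 b2 cs e1 e2 i (j + 2) k"
    unfolding mom_term_def hw_tilde[OF s refl dnz sa_poch[OF sa]] div2_plus2
    by (simp add: algebra_simps)
qed

lemma zero_col_contra:
  fixes M :: "nat \<Rightarrow> nat \<Rightarrow> complex"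
  assumes tau: "tau M 4 \<noteq> 0" and c: "c < 4" and z: "\<And>i. M i c = 0"
  shows False
proof -
  have "\<forall>k<4. (\<Sum>l<4. M k l * (if l = c then 1 else 0)) = 0"
    using z c by (simp add: if_distrib cong: if_cong)
  from rk[OF tau[unfolded tau_def] this] c show False by auto
qed

lemma dh_nz:
  assumes sa: "standing_assms b1 b2 cs e1 e2" and r: "r < length b1"
  shows "b1!r \<noteq> 0"
proof
  assume b0: "b1!r = 0"
  have hw0: "hweight b1 cs e1 k = 0" if "k > 0" for k
  proof -
    have "0 \<in> set (map (\<lambda>b. pochhammer b k) b1)"
      using r b0 that by (force simp: pochhammer_0_left in_set_conv_nth)
    then show ?thesis unfolding hweight_def by (simp add: prod_list_zero_iff)
  qed
  have "moment b1 b2 cs e1 e2 i 2 = 0" for i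
  proof -
    have "mom_term b1 b2 cs e1 e2 i 2 = (\<lambda>k. 0)"
    proof
      fix k show "mom_term b1 b2 cs e1 e2 i 2 k = 0"
        using hw0[of k] unfolding mom_term_def by (cases "k = 0") auto
    qed
    then show ?thesis unfolding moment_def by simp
  qed
  then show False using zero_col_contra[of "moment b1 b2 cs e1 e2" 2] sa_tau[OF sa] by auto
qed

lemma dc_nz:
  assumes sa: "standing_assms b1 b2 cs e1 e2" and q: "q < length b2"
  shows "b2!q \<noteq> 0"
proof
  assume b0: "b2!q = 0"
  have hw0: "hweight b2 cs e2 k = 0" if "k > 0" for k
  proof -
    have "0 \<in> set (map (\<lambda>b. pochhammer b k) b2)"
      using q b0 that by (force simp: pochhammer_0_left in_set_conv_nth)
    then show ?thesis unfolding hweight_def by (simp add: prod_list_zero_iff)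
  qed
  have "moment b1 b2 cs e1 e2 i 3 = 0" for i
  proof -
    have "mom_term b1 b2 cs e1 e2 i 3 = (\<lambda>k. 0)"
    proof
      fix k show "mom_term b1 b2 cs e1 e2 i 3 k = 0"
        using hw0[of k] unfolding mom_term_def by (cases "k = 0") auto
    qed
    then show ?thesis unfolding moment_def by simp
  qed
  then show False using zero_col_contra[of "moment b1 b2 cs e1 e2" 3] sa_tau[OF sa] by auto
qed

lemma row_rel:
  fixes M M' :: "nat \<Rightarrow> nat \<Rightarrow> complex" and c :: "nat \<Rightarrow> complex"
  assumes tau': "\<forall>n. tau M' n \<noteq> 0"
    and g: "is_gauss_borel M S H St" and g': "is_gauss_borel M' S' H' St'"
    and rel: "\<And>k l. M' k l = M k l + c l * M k (l+2)"
  shows "S (Suc (Suc i)) j = S' (Suc (Suc i)) j + (S (Suc (Suc i)) (Suc i) - S' (Suc (Suc i)) (Suc i)) * S' (Suc i) j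
           + (c i * (H (Suc (Suc i)) / H' i)) * S' i j"
proof -
  define N where "N = Suc (Suc i)"
  define \<alpha> where "\<alpha> = S N (Suc i) - S' N (Suc i)"
  define \<beta> where "\<beta> = c i * (H N / H' i)"
  define Y where "Y k = S N k - S' N k - \<alpha> * S' (Suc i) k - \<beta> * S' i k" for k
  have Hnz: "H' i \<noteq> 0" by (rule gb_H_nz[OF tau' g'])
  have Y1: "Y (Suc i) = 0"
    unfolding Y_def \<alpha>_def using gb_S_one[OF g', of "Suc i"] gb_S_tri[OF g', of i "Suc i"] by simp
  have Y2: "Y N = 0"
    unfolding Y_def using gb_S_one[OF g, of N] gb_S_one[OF g', of N] gb_S_tri[OF g', of "Suc i" N]
      gb_S_tri[OF g', of i N] by (simp add: N_def)
  have Yb: "Y k = 0" if "k > N" for k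
    unfolding Y_def using that gb_S_tri[OF g, of N k] gb_S_tri[OF g', of N k] gb_S_tri[OF g', of "Suc i" k]
      gb_S_tri[OF g', of i k] by (simp add: N_def)
  have ext: "(\<Sum>k\<le>N. S' r k * X k) = (\<Sum>k\<le>r. S' r k * X k)" if "r \<le> N" for r X
    using sum_le_ext[of r S' N X] gb_S_tri[OF g', of r] that by auto
  have "\<forall>l<Suc i. (\<Sum>k<Suc i. Y k * M' k l) = 0"
  proof (intro allI impI)
    fix l assume l: "l < Suc i"
    have "(\<Sum>k<Suc i. Y k * M' k l) = (\<Sum>k\<le>N. Y k * M' k l)"
      by (rule sum.mono_neutral_left) (auto simp: N_def Y1 Y2[unfolded N_def] le_Suc_eq)
    also have "\<dots> = (\<Sum>k\<le>N. S N k * M' k l) - (\<Sum>k\<le>N. S' N k * M' k l)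
        - \<alpha> * (\<Sum>k\<le>N. S' (Suc i) k * M' k l) - \<beta> * (\<Sum>k\<le>N. S' i k * M' k l)"
      unfolding Y_def by (simp add: sum_subtractf sum_distrib_left left_diff_distrib mult.assoc)
    also have "(\<Sum>k\<le>N. S N k * M' k l) = (\<Sum>k\<le>N. S N k * M k l) + c l * (\<Sum>k\<le>N. S N k * M k (l+2))"
      by (simp add: rel distrib_left sum.distrib sum_distrib_left mult.left_commute)
    also have "(\<Sum>k\<le>N. S N k * M k l) = 0" using gb_P_zero[OF g, of l N] l by (simp add: N_def)
    also have "(\<Sum>k\<le>N. S' N k * M' k l) = 0" using gb_P_zero[OF g', of l N] l by (simp add: N_def)
    also have "(\<Sum>k\<le>N. S' (Suc i) k * M' k l) = 0"
      using gb_P_zero[OF g', of l "Suc i"] l ext[of "Suc i"] by (simp add: N_def)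
    finally have e: "(\<Sum>k<Suc i. Y k * M' k l) = c l * (\<Sum>k\<le>N. S N k * M k (l+2)) - \<beta> * (\<Sum>k\<le>N. S' i k * M' k l)"
      by simp
    show "(\<Sum>k<Suc i. Y k * M' k l) = 0"
    proof (cases "l = i")
      case True
      have "(\<Sum>k\<le>N. S N k * M k (l+2)) = H N" using gb_P_diag[OF g, of N] True by (simp add: N_def)
      moreover have "(\<Sum>k\<le>N. S' i k * M' k l) = H' i" using gb_P_diag[OF g', of i] True ext[of i] by (simp add: N_def)
      ultimately show ?thesis using e True Hnz by (simp add: \<beta>_def)
    next
      case False
      then have li: "l < i" using l by simp
      have "(\<Sum>k\<le>N. S N k * M k (l+2)) = 0" using gb_P_zero[OF g, of "l+2" N] li by (simp add: N_def)
      moreover have "(\<Sum>k\<le>N. S' i k * M' k l) = 0" using gb_P_zero[OF g', of l i] li ext[of i] by (simp add: N_def)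
      ultimately show ?thesis using e by simp
    qed
  qed
  from lk[OF tau'[rule_format, of "Suc i", unfolded tau_def] this]
  have Y0: "Y k = 0" if "k < Suc i" for k using that by blast
  have "Y j = 0"
  proof -
    consider "j < Suc i" | "j = Suc i" | "j = N" | "j > N" by (cases "j \<le> N") (auto simp: N_def le_Suc_eq)
    then show ?thesis using Y0 Y1 Y2 Yb by cases auto
  qed
  then show ?thesis unfolding Y_def \<alpha>_def \<beta>_def N_def by (simp add: algebra_simps)
qed

lemma alg2:
  fixes p0 p1 p2 p3 a0 a1 a2 a3 q1 q2 x b01 b13 b02 b23 :: complex
  assumes "p0 = p1 + (a0 - a1)*q1 + b01" "p1 = p3 + (a1 - a3)*x + b13"
    "p0 = p2 + (a0 - a2)*q2 + b02" "p2 = p3 + (a2 - a3)*x + b23"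
  shows "b13 + (a0 - a1)*(q1 - x) + b01 = b23 + (a0 - a2)*(q2 - x) + b02"
proof -
  have l: "b13 + (a0 - a1)*(q1 - x) + b01 = p0 - p3 - (a0 - a3)*x" using assms(1,2) by (simp add: algebra_simps)
  have r: "b23 + (a0 - a2)*(q2 - x) + b02 = p0 - p3 - (a0 - a3)*x" using assms(3,4) by (simp add: algebra_simps)
  show ?thesis using l r by simp
qed
lemma alg3:
  fixes P0 P1 P2 P3 A0 A1 A2 A3 Q1 Q2 R1 R2 X Z a1 a2 a3 B01 B13 B02 B23 b13 b23 :: complex
  assumes "P0 = P1 + (A0 - A1)*Q1 + B01 * R1" "P1 = P3 + (A1 - A3)*X + B13 * Z"
    "Q1 = X + (a1 - a3) * Z + b13"
    "P0 = P2 + (A0 - A2)*Q2 + B02 * R2" "P2 = P3 + (A2 - A3)*X + B23 * Z"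
    "Q2 = X + (a2 - a3) * Z + b23"
    "B13 + (A0 - A1)*(a1 - a3) + B01 = B23 + (A0 - A2)*(a2 - a3) + B02"
  shows "(A0 - A1)*b13 + B01*(R1 - Z) = (A0 - A2)*b23 + B02*(R2 - Z)"
proof -
  have l: "(A0 - A1)*b13 + B01*(R1 - Z) = P0 - P3 - (A0 - A3)*X - (B13 + (A0 - A1)*(a1 - a3) + B01)*Z"
    using assms(1,2,3) by (simp add: algebra_simps)
  have r: "(A0 - A2)*b23 + B02*(R2 - Z) = P0 - P3 - (A0 - A3)*X - (B23 + (A0 - A2)*(a2 - a3) + B02)*Z"
    using assms(4,5,6) by (simp add: algebra_simps)
  show ?thesis using l r assms(7) by simp
qed

lemma compat:
  fixes Sa Sb Sc Sd :: "nat \<Rightarrow> nat \<Rightarrow> complex" and bab bbd bac bcd :: "nat \<Rightarrow> complex"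
  assumes R01: "\<And>i j. Sa (Suc (Suc i)) j = Sb (Suc (Suc i)) j + (Sa (Suc (Suc i)) (Suc i) - Sb (Suc (Suc i)) (Suc i)) * Sb (Suc i) j + bab i * Sb i j"
    and R13: "\<And>i j. Sb (Suc (Suc i)) j = Sd (Suc (Suc i)) j + (Sb (Suc (Suc i)) (Suc i) - Sd (Suc (Suc i)) (Suc i)) * Sd (Suc i) j + bbd i * Sd i j"
    and R02: "\<And>i j. Sa (Suc (Suc i)) j = Sc (Suc (Suc i)) j + (Sa (Suc (Suc i)) (Suc i) - Sc (Suc (Suc i)) (Suc i)) * Sc (Suc i) j + bac i * Sc i j"
    and R23: "\<And>i j. Sc (Suc (Suc i)) j = Sd (Suc (Suc i)) j + (Sc (Suc (Suc i)) (Suc i) - Sd (Suc (Suc i)) (Suc i)) * Sd (Suc i) j + bcd i * Sd i j"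
    and u1: "\<And>i. Sb i i = 1" and u2: "\<And>i. Sc i i = 1" and u3: "\<And>i. Sd i i = 1"
  shows compat2: "bbd i + (Sa (Suc (Suc i)) (Suc i) - Sb (Suc (Suc i)) (Suc i)) * (Sb (Suc i) i - Sd (Suc i) i) + bab i
      = bcd i + (Sa (Suc (Suc i)) (Suc i) - Sc (Suc (Suc i)) (Suc i)) * (Sc (Suc i) i - Sd (Suc i) i) + bac i"
    and compat3: "(Sa (Suc (Suc (Suc i))) (Suc (Suc i)) - Sb (Suc (Suc (Suc i))) (Suc (Suc i))) * bbd i
        + bab (Suc i) * (Sb (Suc i) i - Sd (Suc i) i)
      = (Sa (Suc (Suc (Suc i))) (Suc (Suc i)) - Sc (Suc (Suc (Suc i))) (Suc (Suc i))) * bcd i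
        + bac (Suc i) * (Sc (Suc i) i - Sd (Suc i) i)"
proof -
  have c2: "bbd k + (Sa (Suc (Suc k)) (Suc k) - Sb (Suc (Suc k)) (Suc k)) * (Sb (Suc k) k - Sd (Suc k) k) + bab k
      = bcd k + (Sa (Suc (Suc k)) (Suc k) - Sc (Suc (Suc k)) (Suc k)) * (Sc (Suc k) k - Sd (Suc k) k) + bac k" for k
  proof -
    have e1: "Sa (Suc (Suc k)) k = Sb (Suc (Suc k)) k + (Sa (Suc (Suc k)) (Suc k) - Sb (Suc (Suc k)) (Suc k)) * Sb (Suc k) k + bab k"
      using R01[of k k] u1[of k] by simp
    have e2: "Sb (Suc (Suc k)) k = Sd (Suc (Suc k)) k + (Sb (Suc (Suc k)) (Suc k) - Sd (Suc (Suc k)) (Suc k)) * Sd (Suc k) k + bbd k"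
      using R13[of k k] u3[of k] by simp
    have e3: "Sa (Suc (Suc k)) k = Sc (Suc (Suc k)) k + (Sa (Suc (Suc k)) (Suc k) - Sc (Suc (Suc k)) (Suc k)) * Sc (Suc k) k + bac k"
      using R02[of k k] u2[of k] by simp
    have e4: "Sc (Suc (Suc k)) k = Sd (Suc (Suc k)) k + (Sc (Suc (Suc k)) (Suc k) - Sd (Suc (Suc k)) (Suc k)) * Sd (Suc k) k + bcd k"
      using R23[of k k] u3[of k] by simp
    show ?thesis by (rule alg2[OF e1 e2 e3 e4])
  qed
  show "bbd i + (Sa (Suc (Suc i)) (Suc i) - Sb (Suc (Suc i)) (Suc i)) * (Sb (Suc i) i - Sd (Suc i) i) + bab i
      = bcd i + (Sa (Suc (Suc i)) (Suc i) - Sc (Suc (Suc i)) (Suc i)) * (Sc (Suc i) i - Sd (Suc i) i) + bac i"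
    by (rule c2)
  have f1: "Sa (Suc (Suc (Suc i))) i = Sb (Suc (Suc (Suc i))) i + (Sa (Suc (Suc (Suc i))) (Suc (Suc i)) - Sb (Suc (Suc (Suc i))) (Suc (Suc i))) * Sb (Suc (Suc i)) i + bab (Suc i) * Sb (Suc i) i"
    using R01[of "Suc i" i] by simp
  have f2: "Sb (Suc (Suc (Suc i))) i = Sd (Suc (Suc (Suc i))) i + (Sb (Suc (Suc (Suc i))) (Suc (Suc i)) - Sd (Suc (Suc (Suc i))) (Suc (Suc i))) * Sd (Suc (Suc i)) i + bbd (Suc i) * Sd (Suc i) i"
    using R13[of "Suc i" i] by simp
  have f3: "Sb (Suc (Suc i)) i = Sd (Suc (Suc i)) i + (Sb (Suc (Suc i)) (Suc i) - Sd (Suc (Suc i)) (Suc i)) * Sd (Suc i) i + bbd i"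
    using R13[of i i] u3[of i] by simp
  have f4: "Sa (Suc (Suc (Suc i))) i = Sc (Suc (Suc (Suc i))) i + (Sa (Suc (Suc (Suc i))) (Suc (Suc i)) - Sc (Suc (Suc (Suc i))) (Suc (Suc i))) * Sc (Suc (Suc i)) i + bac (Suc i) * Sc (Suc i) i"
    using R02[of "Suc i" i] by simp
  have f5: "Sc (Suc (Suc (Suc i))) i = Sd (Suc (Suc (Suc i))) i + (Sc (Suc (Suc (Suc i))) (Suc (Suc i)) - Sd (Suc (Suc (Suc i))) (Suc (Suc i))) * Sd (Suc (Suc i)) i + bcd (Suc i) * Sd (Suc i) i"
    using R23[of "Suc i" i] by simp
  have f6: "Sc (Suc (Suc i)) i = Sd (Suc (Suc i)) i + (Sc (Suc (Suc i)) (Suc i) - Sd (Suc (Suc i)) (Suc i)) * Sd (Suc i) i + bcd i"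
    using R23[of i i] u3[of i] by simp
  show "(Sa (Suc (Suc (Suc i))) (Suc (Suc i)) - Sb (Suc (Suc (Suc i))) (Suc (Suc i))) * bbd i
        + bab (Suc i) * (Sb (Suc i) i - Sd (Suc i) i)
      = (Sa (Suc (Suc (Suc i))) (Suc (Suc i)) - Sc (Suc (Suc (Suc i))) (Suc (Suc i))) * bcd i
        + bac (Suc i) * (Sc (Suc i) i - Sd (Suc i) i)"
    by (rule alg3[OF f1 f2 f3 f4 f5 f6 c2[of "Suc i"]])
qed

theorem mainTheorem2:
  fixes b1 b2 cs :: "complex list" and e1 e2 :: complex and r q s n :: nat
    and B1 B2 C :: "nat \<Rightarrow> complex list"
    and u v f g :: "nat \<Rightarrow> nat \<Rightarrow> nat \<Rightarrow> nat \<Rightarrow> complex"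
    and dh dc dt :: complex
  assumes r: "r < length b1" and q: "q < length b2" and s: "s < length cs"
  defines "B1 \<equiv> \<lambda>a. if a = 0 then b1 else b1[r := b1 ! r + 1]"
      and "B2 \<equiv> \<lambda>a. if a = 0 then b2 else b2[q := b2 ! q + 1]"
      and "C \<equiv> \<lambda>a. if a = 0 then cs else cs[s := cs ! s - 1]"
  assumes sa: "\<And>h k t. h \<le> 1 \<Longrightarrow> k \<le> 1 \<Longrightarrow> t \<le> 1 \<Longrightarrow> standing_assms (B1 h) (B2 k) (C t) e1 e2"
  defines "u \<equiv> \<lambda>h k t m. GB_H (moment (B1 h) (B2 k) (C t) e1 e2) (2 * m)"
      and "v \<equiv> \<lambda>h k t m. GB_H (moment (B1 h) (B2 k) (C t) e1 e2) (2 * m + 1)"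
      and "f \<equiv> \<lambda>h k t m. GB_S1 (moment (B1 h) (B2 k) (C t) e1 e2) (2 * m)"
      and "g \<equiv> \<lambda>h k t m. GB_S1 (moment (B1 h) (B2 k) (C t) e1 e2) (2 * m + 1)"
      and "dh \<equiv> b1 ! r" and "dc \<equiv> b2 ! q" and "dt \<equiv> cs ! s - 1"
  shows
   "(g 0 0 0 n * (f 0 0 1 n - f 1 0 0 n) + g 0 0 1 n * (f 1 0 1 n - f 0 0 1 n) + g 1 0 0 n * (f 1 0 0 n - f 1 0 1 n)
       = 1/dt * (u 1 0 0 (Suc n) / u 1 0 1 n - u 0 0 0 (Suc n) / u 0 0 1 n)
         + 1/dh * (u 0 0 0 (Suc n) / u 1 0 0 n - u 0 0 1 (Suc n) / u 1 0 1 n)) \<and>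
    (f 0 0 0 (Suc n) * (g 1 0 0 n - g 0 0 1 n) + f 0 0 1 (Suc n) * (g 0 0 1 n - g 1 0 1 n) + f 1 0 0 (Suc n) * (g 1 0 1 n - g 1 0 0 n)
       = 1/dt * (v 0 0 0 (Suc n) / v 0 0 1 n - v 1 0 0 (Suc n) / v 1 0 1 n)) \<and>
    (1/dt * (u 1 0 0 (Suc n) / u 1 0 1 n) * (f 1 0 0 (Suc n) - f 0 0 0 (Suc n))
       + 1/dh * (u 0 0 1 (Suc n) / u 1 0 1 n) * (f 0 0 0 (Suc n) - f 0 0 1 (Suc n))
       + 1/dt * (v 0 0 0 (Suc n) / v 0 0 1 n) * (f 0 0 1 n - f 1 0 1 n) = 0) \<and>
    (1/dh * (u 0 0 0 (Suc (Suc n)) / u 1 0 0 (Suc n)) * (g 1 0 0 n - g 1 0 1 n)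
       + 1/dt * (u 0 0 0 (Suc (Suc n)) / u 0 0 1 (Suc n)) * (g 1 0 1 n - g 0 0 1 n)
       + 1/dt * (v 1 0 0 (Suc n) / v 1 0 1 n) * (g 0 0 0 (Suc n) - g 1 0 0 (Suc n)) = 0) \<and>
    (g 0 0 0 n * (f 0 0 1 n - f 0 1 0 n) + g 0 0 1 n * (f 0 1 1 n - f 0 0 1 n) + g 0 1 0 n * (f 0 1 0 n - f 0 1 1 n)
       = 1/dt * (u 0 1 0 (Suc n) / u 0 1 1 n - u 0 0 0 (Suc n) / u 0 0 1 n)) \<and>
    (f 0 0 0 (Suc n) * (g 0 0 1 n - g 0 1 0 n) + f 0 0 1 (Suc n) * (g 0 1 1 n - g 0 0 1 n) + f 0 1 0 (Suc n) * (g 0 1 0 n - g 0 1 1 n)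
       = 1/dt * (v 0 1 0 (Suc n) / v 0 1 1 n - v 0 0 0 (Suc n) / v 0 0 1 n)
         + 1/dc * (v 0 0 0 (Suc n) / v 0 1 0 n - v 0 0 1 (Suc n) / v 0 1 1 n)) \<and>
    (1/dt * (u 0 1 0 (Suc n) / u 0 1 1 n) * (f 0 0 0 (Suc n) - f 0 1 0 (Suc n))
       + 1/dc * (v 0 0 0 (Suc n) / v 0 1 0 n) * (f 0 1 0 n - f 0 1 1 n)
       + 1/dt * (v 0 0 0 (Suc n) / v 0 0 1 n) * (f 0 1 1 n - f 0 0 1 n) = 0) \<and>
    (1/dt * (u 0 0 0 (Suc (Suc n)) / u 0 0 1 (Suc n)) * (g 0 0 1 n - g 0 1 1 n)
       + 1/dc * (v 0 0 1 (Suc n) / v 0 1 1 n) * (g 0 0 0 (Suc n) - g 0 0 1 (Suc n))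
       + 1/dt * (v 0 1 0 (Suc n) / v 0 1 1 n) * (g 0 1 0 (Suc n) - g 0 0 0 (Suc n)) = 0) \<and>
    (1/dh * (u 0 1 0 (Suc n) / u 1 1 0 n) * (f 0 0 0 (Suc n) - f 0 1 0 (Suc n))
       + 1/dc * (v 0 0 0 (Suc n) / v 0 1 0 n) * (f 0 1 0 n - f 1 1 0 n) = 0) \<and>
    (1/dh * (u 0 0 0 (Suc (Suc n)) / u 1 0 0 (Suc n)) * (g 1 1 0 n - g 1 0 0 n)
       + 1/dc * (v 1 0 0 (Suc n) / v 1 1 0 n) * (g 1 0 0 (Suc n) - g 0 0 0 (Suc n)) = 0) \<and>
    (g 0 0 0 n * (f 0 1 0 n - f 1 0 0 n) + g 0 1 0 n * (f 1 1 0 n - f 0 1 0 n) + g 1 0 0 n * (f 1 0 0 n - f 1 1 0 n)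
       = 1/dh * (u 0 0 0 (Suc n) / u 1 0 0 n - u 0 1 0 (Suc n) / u 1 1 0 n)) \<and>
    (f 0 0 0 (Suc n) * (g 0 1 0 n - g 1 0 0 n) + f 0 1 0 (Suc n) * (g 1 1 0 n - g 0 1 0 n) + f 1 0 0 (Suc n) * (g 1 0 0 n - g 1 1 0 n)
       = 1/dc * (v 1 0 0 (Suc n) / v 1 1 0 n - v 0 0 0 (Suc n) / v 0 1 0 n))"
proof -
  have saX: "standing_assms (B1 h) (B2 k) (C t) e1 e2" if "h \<le> 1" "k \<le> 1" "t \<le> 1" for h k t
    using sa[OF that] .
  define MM where "MM h k t = moment (B1 h) (B2 k) (C t) e1 e2" for h k t
  define SS where "SS h k t = fst (gauss_borel (MM h k t))" for h k t
  define HH where "HH h k t = fst (snd (gauss_borel (MM h k t)))" for h k t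
  define TT where "TT h k t = snd (snd (gauss_borel (MM h k t)))" for h k t
  have TAU: "\<forall>n. tau (MM h k t) n \<noteq> 0" if "h \<le> 1" "k \<le> 1" "t \<le> 1" for h k t
    using sa_tau[OF saX[OF that]] by (simp add: MM_def)
  have G: "is_gauss_borel (MM h k t) (SS h k t) (HH h k t) (TT h k t)" if "h \<le> 1" "k \<le> 1" "t \<le> 1" for h k t
    unfolding SS_def HH_def TT_def by (rule gb_ok[OF TAU[OF that]])
  have U: "SS h k t i i = 1" if "h \<le> 1" "k \<le> 1" "t \<le> 1" for h k t i
    by (rule gb_S_one[OF G[OF that]])
  have sa0: "standing_assms b1 b2 cs e1 e2" using saX[of 0 0 0] by (simp add: B1_def B2_def C_def)
  have dh0: "b1 ! r \<noteq> 0" by (rule dh_nz[OF sa0 r])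
  have dc0: "b2 ! q \<noteq> 0" by (rule dc_nz[OF sa0 q])
  have hatrel: "MM 1 k t a l = MM 0 k t a l + (if even l then 1/dh else 0) * MM 0 k t a (l+2)"
    if "k \<le> 1" "t \<le> 1" for k t a l
  proof -
    have s0: "standing_assms b1 (B2 k) (C t) e1 e2" using saX[OF le0 that] by (simp add: B1_def)
    have "MM 1 k t a l = moment (b1[r := b1!r+1]) (B2 k) (C t) e1 e2 a l" by (simp add: MM_def B1_def)
    also have "\<dots> = moment b1 (B2 k) (C t) e1 e2 a l + (if even l then 1/(b1!r) else 0) * moment b1 (B2 k) (C t) e1 e2 a (l+2)"
      by (rule mom_hat[OF s0 r dh0])
    also have "\<dots> = MM 0 k t a l + (if even l then 1/dh else 0) * MM 0 k t a (l+2)"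
      by (simp add: MM_def B1_def dh_def)
    finally show ?thesis .
  qed
  have checkrel: "MM h 1 t a l = MM h 0 t a l + (if odd l then 1/dc else 0) * MM h 0 t a (l+2)"
    if "h \<le> 1" "t \<le> 1" for h t a l
  proof -
    have s0: "standing_assms (B1 h) b2 (C t) e1 e2" using saX[OF that(1) le0 that(2)] by (simp add: B2_def)
    have "MM h 1 t a l = moment (B1 h) (b2[q := b2!q+1]) (C t) e1 e2 a l" by (simp add: MM_def B2_def)
    also have "\<dots> = moment (B1 h) b2 (C t) e1 e2 a l + (if odd l then 1/(b2!q) else 0) * moment (B1 h) b2 (C t) e1 e2 a (l+2)"
      by (rule mom_check[OF s0 q dc0])
    also have "\<dots> = MM h 0 t a l + (if odd l then 1/dc else 0) * MM h 0 t a (l+2)"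
      by (simp add: MM_def B2_def dc_def)
    finally show ?thesis .
  qed
  have tilderel: "MM h k 1 a l = MM h k 0 a l + 1/dt * MM h k 0 a (l+2)"
    if "h \<le> 1" "k \<le> 1" for h k a l
  proof -
    have s0: "standing_assms (B1 h) (B2 k) cs e1 e2" using saX[OF that le0] by (simp add: C_def)
    have s1: "standing_assms (B1 h) (B2 k) (cs[s := cs!s - 1]) e1 e2" using saX[OF that le_refl] by (simp add: C_def)
    have "MM h k 1 a l = moment (B1 h) (B2 k) (cs[s := cs!s - 1]) e1 e2 a l" by (simp add: MM_def C_def)
    also have "\<dots> = moment (B1 h) (B2 k) cs e1 e2 a l + 1/(cs!s - 1) * moment (B1 h) (B2 k) cs e1 e2 a (l+2)"
      by (rule mom_tilde[OF s0 s1 s])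
    also have "\<dots> = MM h k 0 a l + 1/dt * MM h k 0 a (l+2)"
      by (simp add: MM_def C_def dt_def)
    finally show ?thesis .
  qed
  have RH: "SS 0 k t (Suc (Suc i)) j = SS 1 k t (Suc (Suc i)) j
      + (SS 0 k t (Suc (Suc i)) (Suc i) - SS 1 k t (Suc (Suc i)) (Suc i)) * SS 1 k t (Suc i) j
      + ((if even i then 1/dh else 0) * (HH 0 k t (Suc (Suc i)) / HH 1 k t i)) * SS 1 k t i j"
    if "k \<le> 1" "t \<le> 1" for k t i j
    by (rule row_rel[where c="\<lambda>l. if even l then 1/dh else 0", OF TAU[OF le_refl that] G[OF le0 that] G[OF le_refl that]])
      (rule hatrel[OF that])
  have RC: "SS h 0 t (Suc (Suc i)) j = SS h 1 t (Suc (Suc i)) j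
      + (SS h 0 t (Suc (Suc i)) (Suc i) - SS h 1 t (Suc (Suc i)) (Suc i)) * SS h 1 t (Suc i) j
      + ((if odd i then 1/dc else 0) * (HH h 0 t (Suc (Suc i)) / HH h 1 t i)) * SS h 1 t i j"
    if "h \<le> 1" "t \<le> 1" for h t i j
    by (rule row_rel[where c="\<lambda>l. if odd l then 1/dc else 0", OF TAU[OF that(1) le_refl that(2)] G[OF that(1) le0 that(2)] G[OF that(1) le_refl that(2)]])
      (rule checkrel[OF that])
  have RT: "SS h k 0 (Suc (Suc i)) j = SS h k 1 (Suc (Suc i)) j
      + (SS h k 0 (Suc (Suc i)) (Suc i) - SS h k 1 (Suc (Suc i)) (Suc i)) * SS h k 1 (Suc i) j
      + (1/dt * (HH h k 0 (Suc (Suc i)) / HH h k 1 i)) * SS h k 1 i j"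
    if "h \<le> 1" "k \<le> 1" for h k i j
    by (rule row_rel[where c="\<lambda>l. 1/dt", OF TAU[OF that le_refl] G[OF that le0] G[OF that le_refl]])
      (rule tilderel[OF that])
  have uC: "u h k t m = HH h k t (2*m)" for h k t m by (simp add: u_def GB_H_def HH_def MM_def)
  have vC: "v h k t m = HH h k t (Suc (2*m))" for h k t m by (simp add: v_def GB_H_def HH_def MM_def)
  have fC: "f h k t m = SS h k t (Suc (2*m)) (2*m)" for h k t m by (simp add: f_def GB_S1_def SS_def MM_def)
  have gC: "g h k t m = SS h k t (Suc (Suc (2*m))) (Suc (2*m))" for h k t m by (simp add: g_def GB_S1_def SS_def MM_def)
  have two_Suc: "2 * Suc m = Suc (Suc (2*m))" for m :: nat by simp
  note HT = compat[where Sa="SS 0 0 0" and Sb="SS 1 0 0" and Sc="SS 0 0 1" and Sd="SS 1 0 1",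
      OF RH[OF le0 le0] RT[OF le_refl le0] RT[OF le0 le0] RH[OF le0 le_refl]
         U[OF le_refl le0 le0] U[OF le0 le0 le_refl] U[OF le_refl le0 le_refl]]
  note CT = compat[where Sa="SS 0 0 0" and Sb="SS 0 1 0" and Sc="SS 0 0 1" and Sd="SS 0 1 1",
      OF RC[OF le0 le0] RT[OF le0 le_refl] RT[OF le0 le0] RC[OF le0 le_refl]
         U[OF le0 le_refl le0] U[OF le0 le0 le_refl] U[OF le0 le_refl le_refl]]
  note HC = compat[where Sa="SS 0 0 0" and Sb="SS 1 0 0" and Sc="SS 0 1 0" and Sd="SS 1 1 0",
      OF RH[OF le0 le0] RC[OF le_refl le0] RC[OF le0 le0] RH[OF le_refl le0]
         U[OF le_refl le0 le0] U[OF le0 le_refl le0] U[OF le_refl le_refl le0]]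
  have E1: "g 0 0 0 n * (f 0 0 1 n - f 1 0 0 n) + g 0 0 1 n * (f 1 0 1 n - f 0 0 1 n) + g 1 0 0 n * (f 1 0 0 n - f 1 0 1 n)
       = 1/dt * (u 1 0 0 (Suc n) / u 1 0 1 n - u 0 0 0 (Suc n) / u 0 0 1 n)
         + 1/dh * (u 0 0 0 (Suc n) / u 1 0 0 n - u 0 0 1 (Suc n) / u 1 0 1 n)"
    using HT(1)[where i="2*n"] unfolding uC vC fC gC two_Suc by (simp add: algebra_simps)
  have E2: "f 0 0 0 (Suc n) * (g 1 0 0 n - g 0 0 1 n) + f 0 0 1 (Suc n) * (g 0 0 1 n - g 1 0 1 n) + f 1 0 0 (Suc n) * (g 1 0 1 n - g 1 0 0 n)
       = 1/dt * (v 0 0 0 (Suc n) / v 0 0 1 n - v 1 0 0 (Suc n) / v 1 0 1 n)"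
    using HT(1)[where i="Suc (2*n)"] unfolding uC vC fC gC two_Suc by (simp add: algebra_simps)
  have E3: "1/dt * (u 1 0 0 (Suc n) / u 1 0 1 n) * (f 1 0 0 (Suc n) - f 0 0 0 (Suc n))
       + 1/dh * (u 0 0 1 (Suc n) / u 1 0 1 n) * (f 0 0 0 (Suc n) - f 0 0 1 (Suc n))
       + 1/dt * (v 0 0 0 (Suc n) / v 0 0 1 n) * (f 0 0 1 n - f 1 0 1 n) = 0"
    using HT(2)[where i="2*n"] unfolding uC vC fC gC two_Suc by (simp add: algebra_simps)
  have E4: "1/dh * (u 0 0 0 (Suc (Suc n)) / u 1 0 0 (Suc n)) * (g 1 0 0 n - g 1 0 1 n)
       + 1/dt * (u 0 0 0 (Suc (Suc n)) / u 0 0 1 (Suc n)) * (g 1 0 1 n - g 0 0 1 n)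
       + 1/dt * (v 1 0 0 (Suc n) / v 1 0 1 n) * (g 0 0 0 (Suc n) - g 1 0 0 (Suc n)) = 0"
    using HT(2)[where i="Suc (2*n)"] unfolding uC vC fC gC two_Suc by (simp add: algebra_simps)
  have E5: "g 0 0 0 n * (f 0 0 1 n - f 0 1 0 n) + g 0 0 1 n * (f 0 1 1 n - f 0 0 1 n) + g 0 1 0 n * (f 0 1 0 n - f 0 1 1 n)
       = 1/dt * (u 0 1 0 (Suc n) / u 0 1 1 n - u 0 0 0 (Suc n) / u 0 0 1 n)"
    using CT(1)[where i="2*n"] unfolding uC vC fC gC two_Suc by (simp add: algebra_simps)
  have E6: "f 0 0 0 (Suc n) * (g 0 0 1 n - g 0 1 0 n) + f 0 0 1 (Suc n) * (g 0 1 1 n - g 0 0 1 n) + f 0 1 0 (Suc n) * (g 0 1 0 n - g 0 1 1 n)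
       = 1/dt * (v 0 1 0 (Suc n) / v 0 1 1 n - v 0 0 0 (Suc n) / v 0 0 1 n)
         + 1/dc * (v 0 0 0 (Suc n) / v 0 1 0 n - v 0 0 1 (Suc n) / v 0 1 1 n)"
    using CT(1)[where i="Suc (2*n)"] unfolding uC vC fC gC two_Suc by (simp add: algebra_simps)
  have E7: "1/dt * (u 0 1 0 (Suc n) / u 0 1 1 n) * (f 0 0 0 (Suc n) - f 0 1 0 (Suc n))
       + 1/dc * (v 0 0 0 (Suc n) / v 0 1 0 n) * (f 0 1 0 n - f 0 1 1 n)
       + 1/dt * (v 0 0 0 (Suc n) / v 0 0 1 n) * (f 0 1 1 n - f 0 0 1 n) = 0"
    using CT(2)[where i="2*n"] unfolding uC vC fC gC two_Suc by (simp add: algebra_simps)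
  have E8: "1/dt * (u 0 0 0 (Suc (Suc n)) / u 0 0 1 (Suc n)) * (g 0 0 1 n - g 0 1 1 n)
       + 1/dc * (v 0 0 1 (Suc n) / v 0 1 1 n) * (g 0 0 0 (Suc n) - g 0 0 1 (Suc n))
       + 1/dt * (v 0 1 0 (Suc n) / v 0 1 1 n) * (g 0 1 0 (Suc n) - g 0 0 0 (Suc n)) = 0"
    using CT(2)[where i="Suc (2*n)"] unfolding uC vC fC gC two_Suc by (simp add: algebra_simps)
  have E9: "1/dh * (u 0 1 0 (Suc n) / u 1 1 0 n) * (f 0 0 0 (Suc n) - f 0 1 0 (Suc n))
       + 1/dc * (v 0 0 0 (Suc n) / v 0 1 0 n) * (f 0 1 0 n - f 1 1 0 n) = 0"
    using HC(2)[where i="2*n"] unfolding uC vC fC gC two_Suc by (simp add: algebra_simps)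
  have E10: "1/dh * (u 0 0 0 (Suc (Suc n)) / u 1 0 0 (Suc n)) * (g 1 1 0 n - g 1 0 0 n)
       + 1/dc * (v 1 0 0 (Suc n) / v 1 1 0 n) * (g 1 0 0 (Suc n) - g 0 0 0 (Suc n)) = 0"
    using HC(2)[where i="Suc (2*n)"] unfolding uC vC fC gC two_Suc by (simp add: algebra_simps)
  have E11: "g 0 0 0 n * (f 0 1 0 n - f 1 0 0 n) + g 0 1 0 n * (f 1 1 0 n - f 0 1 0 n) + g 1 0 0 n * (f 1 0 0 n - f 1 1 0 n)
       = 1/dh * (u 0 0 0 (Suc n) / u 1 0 0 n - u 0 1 0 (Suc n) / u 1 1 0 n)"
    using HC(1)[where i="2*n"] unfolding uC vC fC gC two_Suc by (simp add: algebra_simps)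
  have E12: "f 0 0 0 (Suc n) * (g 0 1 0 n - g 1 0 0 n) + f 0 1 0 (Suc n) * (g 1 1 0 n - g 0 1 0 n) + f 1 0 0 (Suc n) * (g 1 0 0 n - g 1 1 0 n)
       = 1/dc * (v 1 0 0 (Suc n) / v 1 1 0 n - v 0 0 0 (Suc n) / v 0 1 0 n)"
    using HC(1)[where i="Suc (2*n)"] unfolding uC vC fC gC two_Suc by (simp add: algebra_simps)
  show ?thesis using E1 E2 E3 E4 E5 E6 E7 E8 E9 E10 E11 E12 by blast
qed

end
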